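(* Let $A\in\mathbb{R}^{m\times n}$ with $\lambda:=\lambda_{\max}(A^TA)>0$, $b\in\mathbb{R}^m$, and $D\subseteq\mathbb{R}^n$ a nonempty compact set. Given $x^0\in\mathbb{R}^n$ and $\gamma\in(0,\frac1{12\lambda})$, consider the iteration \[ y^{t+1}=[(5\gamma\lambda+1)I+\gamma A^TA]^{-1}(x^t+\gamma A^Tb),\quad z^{t+1}\in P_D\!\left(\frac{2y^{t+1}-x^t}{1-5\lambda\gamma}\right),\quad x^{t+1}=x^t+2(z^{t+1}-y^{t+1}). \] Then $\{(y^t,z^t,x^t)\}$ is bounded and every cluster point $(\bar y,\bar z,\bar x)$ satisfies $\bar y=\bar z$ and $0\in A^T(A\bar z-b)+\partial\delta_D(\bar z)$, i.e., $\bar z$ is a stationary point of $\min_{u\in D}\frac12\|Au-b\|^2$.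
   Context: $P_D(x)$ denotes the (possibly multivalued) set of points of $D$ nearest to $x$ (any element may be chosen); $\delta_D$ is the indicator function of $D$; $\partial\delta_D$ is the limiting subdifferential: $v\in\partial h(x)$ iff there exist $x^t\to x$ with $h(x^t)\to h(x)$ and $v^t\to v$ such that $\liminf_{z\to x^t, z\ne x^t}\frac{h(z)-h(x^t)-\langle v^t,z-x^t\rangle}{\|z-x^t\|}\ge0$ for each $t$. *)

theory Defs
  imports "HOL-Analysis.Analysis"
begin

definition lambda_max :: "real^'n^'n \<Rightarrow> real" where
  "lambda_max M = Max {l. \<exists>v. v \<noteq> 0 \<and> M *v v = l *\<^sub>R v}"

definition proj_set :: "('a::metric_space) set \<Rightarrow> 'a \<Rightarrow> 'a set" where
  "proj_set D x = {z \<in> D. \<forall>w\<in>D. dist x z \<le> dist x w}"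

definition indicator_fun :: "'a set \<Rightarrow> 'a \<Rightarrow> ereal" where
  "indicator_fun D x = (if x \<in> D then 0 else \<infinity>)"

definition regular_subdiff :: "('a::real_inner \<Rightarrow> ereal) \<Rightarrow> 'a \<Rightarrow> 'a set" where
  "regular_subdiff h x = {v. \<bar>h x\<bar> \<noteq> \<infinity> \<and>
     Liminf (at x) (\<lambda>z. (h z - h x - ereal (inner v (z - x))) / ereal (norm (z - x))) \<ge> 0}"

definition limiting_subdiff :: "('a::real_inner \<Rightarrow> ereal) \<Rightarrow> 'a \<Rightarrow> 'a set" where
  "limiting_subdiff h x = {v. \<exists>xs vs. xs \<longlonglongrightarrow> x \<and> (\<lambda>t. h (xs t)) \<longlonglongrightarrow> h x \<and>
     vs \<longlonglongrightarrow> v \<and> (\<forall>t. vs t \<in> regular_subdiff h (xs t))}"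

end

theory Submission
  imports Defs
begin


lemma inner_transpose: "inner (transpose A *v w) v = inner w ((A::real^'n^'m) *v v)"
  by (simp add: dot_lmul_matrix)

lemma S_inner: "inner ((transpose A ** A) *v u) v = inner ((A::real^'n^'m) *v u) (A *v v)"
  by (simp only: matrix_vector_mul_assoc[symmetric] inner_transpose)

lemma quad_nonneg_zero:
  fixes sa ra :: real
  assumes "\<And>t::real. 0 \<le> 2 * t * sa + t^2 * ra" and "0 \<le> ra"
  shows "sa = 0"
proof -
  have pos: "ra + 1 > 0" using assms(2) by simp
  define t where "t = -sa/(ra+1)"
  have sa: "sa = - t * (ra + 1)" using pos unfolding t_def by (simp add: field_simps)
  have "0 \<le> 2 * t * sa + t^2 * ra" by (rule assms(1))
  also have "\<dots> = - (t^2 * (ra + 2))" unfolding sa by (simp add: algebra_simps power2_eq_square)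
  finally have "t^2 * (ra + 2) \<le> 0" by simp
  hence "t^2 \<le> 0" using assms(2)
    by (metis add_nonneg_pos mult_le_0_iff not_less zero_less_numeral)
  hence "t = 0" by simp
  thus ?thesis using sa by simp
qed

lemma eig_finite:
  fixes A :: "real^'n^'m"
  shows "finite {l. \<exists>v. v \<noteq> 0 \<and> (transpose A ** A) *v v = l *\<^sub>R v}"
proof -
  define S where "S = transpose A ** A"
  define E where "E = {l. \<exists>v. v \<noteq> 0 \<and> S *v v = l *\<^sub>R v}"
  define ev where "ev l = (SOME v. v \<noteq> 0 \<and> S *v v = l *\<^sub>R v)" for l
  have ev: "ev l \<noteq> 0 \<and> S *v ev l = l *\<^sub>R ev l" if "l \<in> E" for l
    using that unfolding E_def ev_def by (metis (mono_tags, lifting) mem_Collect_eq someI_ex)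
  have orth: "inner u v = 0" if "S *v u = l *\<^sub>R u" "S *v v = l' *\<^sub>R v" "l \<noteq> l'" for u v l l'
  proof -
    have "l * inner u v = inner (S *v u) v" using that by simp
    also have "\<dots> = inner (A *v u) (A *v v)" unfolding S_def by (rule S_inner)
    also have "\<dots> = inner (S *v v) u" unfolding S_def S_inner by (rule inner_commute)
    also have "\<dots> = l' * inner u v" using that by (simp add: inner_commute)
    finally show ?thesis using that(3) by simp
  qed
  have inj: "inj_on ev E"
  proof (rule inj_onI)
    fix l l' assume "l \<in> E" "l' \<in> E" "ev l = ev l'"
    hence "l *\<^sub>R ev l = l' *\<^sub>R ev l" "ev l \<noteq> 0" using ev by metis+
    thus "l = l'" by (metis scaleR_cancel_right)
  qed
  have "pairwise orthogonal (ev ` E)"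
    unfolding pairwise_def orthogonal_def
    using ev orth by (metis imageE)
  moreover have "0 \<notin> ev ` E" using ev by auto
  ultimately have "independent (ev ` E)" by (rule pairwise_orthogonal_independent)
  hence "finite (ev ` E)" by (rule finiteI_independent)
  hence "finite E" using inj finite_imageD by blast
  thus ?thesis unfolding E_def S_def .
qed

lemma eig_bound:
  fixes A :: "real^'n^'m"
  shows "norm (A *v v)^2 \<le> lambda_max (transpose A ** A) * norm v ^2"
proof -
  define S where "S = transpose A ** A"
  have cont: "continuous_on (sphere 0 1) (\<lambda>v::real^'n. norm (A *v v)^2)"
    by (intro continuous_intros)
  have ne: "sphere (0::real^'n) 1 \<noteq> {}" by simp
  obtain v0 where v0: "v0 \<in> sphere 0 1" and v0max: "\<And>v. v \<in> sphere 0 1 \<Longrightarrow> norm (A *v v)^2 \<le> norm (A *v v0)^2"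
    using continuous_attains_sup[OF compact_sphere ne cont] by blast
  define \<mu> where "\<mu> = norm (A *v v0)^2"
  have nv0: "norm v0 = 1" using v0 by simp
  have bnd: "norm (A *v v)^2 \<le> \<mu> * norm v^2" for v
  proof (cases "v = 0")
    case True thus ?thesis by simp
  next
    case False
    hence "(1/norm v) *\<^sub>R v \<in> sphere 0 1" by simp
    hence "norm (A *v ((1/norm v) *\<^sub>R v))^2 \<le> \<mu>" unfolding \<mu>_def by (rule v0max)
    hence "norm (A *v v)^2 / norm v^2 \<le> \<mu>"
      by (simp add: matrix_vector_mult_scaleR power_divide)
    thus ?thesis using False by (simp add: divide_le_eq mult.commute)
  qed
  have eig: "S *v v0 = \<mu> *\<^sub>R v0"
  proof -
    have s0: "inner (\<mu> *\<^sub>R v0 - S *v v0) w = 0" for w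
    proof (rule quad_nonneg_zero)
      show "0 \<le> \<mu> * norm w^2 - norm (A *v w)^2" using bnd[of w] by simp
      fix t :: real
      have "0 \<le> \<mu> * norm (v0 + t *\<^sub>R w)^2 - norm (A *v (v0 + t *\<^sub>R w))^2"
        using bnd[of "v0 + t *\<^sub>R w"] by simp
      also have "\<dots> = \<mu> * inner (v0 + t *\<^sub>R w) (v0 + t *\<^sub>R w) - inner (A *v v0 + t *\<^sub>R (A *v w)) (A *v v0 + t *\<^sub>R (A *v w))"
        by (simp only: power2_norm_eq_inner matrix_vector_right_distrib matrix_vector_mult_scaleR)
      also have "\<dots> = (\<mu> * inner v0 v0 - inner (A *v v0) (A *v v0)) + 2 * t * (\<mu> * inner v0 w - inner (A *v v0) (A *v w))
            + t^2 * (\<mu> * inner w w - inner (A *v w) (A *v w))"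
        by (simp add: inner_add_left inner_add_right inner_commute algebra_simps power2_eq_square)
      also have "\<mu> * inner v0 v0 - inner (A *v v0) (A *v v0) = 0"
        using nv0 by (simp add: \<mu>_def power2_norm_eq_inner[symmetric])
      also have "\<mu> * inner v0 w - inner (A *v v0) (A *v w) = inner (\<mu> *\<^sub>R v0 - S *v v0) w"
        unfolding S_def by (simp add: inner_diff_left S_inner)
      also have "\<mu> * inner w w - inner (A *v w) (A *v w) = \<mu> * norm w^2 - norm (A *v w)^2"
        by (simp add: power2_norm_eq_inner)
      finally show "0 \<le> 2 * t * inner (\<mu> *\<^sub>R v0 - S *v v0) w + t^2 * (\<mu> * norm w^2 - norm (A *v w)^2)" by simp
    qed
    have "inner (\<mu> *\<^sub>R v0 - S *v v0) (\<mu> *\<^sub>R v0 - S *v v0) = 0" by (rule s0)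
    thus ?thesis by simp
  qed
  have "\<mu> \<in> {l. \<exists>v. v \<noteq> 0 \<and> (transpose A ** A) *v v = l *\<^sub>R v}"
    using eig nv0 unfolding S_def by (auto intro!: exI[of _ v0])
  hence "\<mu> \<le> lambda_max (transpose A ** A)"
    unfolding lambda_max_def using eig_finite by (intro Max_ge) auto
  hence "\<mu> * norm v^2 \<le> lambda_max (transpose A ** A) * norm v^2"
    by (simp add: mult_right_mono)
  thus ?thesis using bnd[of v] by linarith
qed




definition Vf :: "real^'n^'m \<Rightarrow> real^'m \<Rightarrow> real \<Rightarrow> real \<Rightarrow> real^'n \<Rightarrow> real^'n \<Rightarrow> real" where
  "Vf A b c \<gamma> y z = norm (A *v z)^2 / 2 - inner (transpose A *v b) z + norm (z - y)^2 / (2*\<gamma>)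
     - (norm (A *v (z - y))^2 + c * norm (z - y)^2) / 2"

lemma inner_lmul2: "inner v (w v* A) = inner ((A::real^'n^'m) *v v) w"
  by (metis dot_lmul_matrix inner_commute)

definition Ff :: "real^'n^'m \<Rightarrow> real^'m \<Rightarrow> real \<Rightarrow> real^'n \<Rightarrow> real" where
  "Ff A b c u = norm (A *v u)^2 / 2 + c/2 * norm u^2 - inner (transpose A *v b) u"

lemma Fexp:
  fixes A :: "real^'n^'m"
  shows "Ff A b c (u + e) = Ff A b c u + inner (transpose A *v (A *v u) + c *\<^sub>R u - transpose A *v b) e
          + (norm (A *v e)^2 + c * norm e^2) / 2"
  unfolding Ff_def
  apply (simp add: power2_norm_eq_inner matrix_vector_right_distrib inner_add_left inner_add_right
      inner_diff_left dot_lmul_matrix inner_lmul2 inner_commute algebra_simps)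
  by (simp add: field_simps)

lemma S_norm_bound:
  fixes A :: "real^'n^'m"
  assumes "lambda_max (transpose A ** A) \<ge> 0"
  shows "norm (transpose A *v (A *v v))^2 \<le> lambda_max (transpose A ** A) * norm (A *v v)^2"
proof -
  define lam where "lam = lambda_max (transpose A ** A)"
  define s where "s = transpose A *v (A *v v)"
  have "norm s^2 = inner (A *v v) (A *v s)" unfolding s_def
    by (simp only: power2_norm_eq_inner inner_transpose)
  also have "\<dots> \<le> norm (A *v v) * norm (A *v s)" by (rule norm_cauchy_schwarz)
  finally have 1: "norm s^2 \<le> norm (A *v v) * norm (A *v s)" .
  have "(norm s^2)^2 \<le> (norm (A *v v) * norm (A *v s))^2"
    using 1 by (intro power_mono) auto
  also have "\<dots> = norm (A *v v)^2 * norm (A *v s)^2" by (simp add: power_mult_distrib)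
  also have "\<dots> \<le> norm (A *v v)^2 * (lam * norm s^2)"
    unfolding lam_def by (intro mult_left_mono eig_bound) auto
  finally have 2: "norm s^2 * norm s^2 \<le> (lam * norm (A *v v)^2) * norm s^2"
    by (simp add: power2_eq_square algebra_simps)
  show ?thesis
  proof (cases "norm s = 0")
    case True thus ?thesis using assms by (simp add: s_def lam_def)
  next
    case False
    hence "norm s^2 > 0" by simp
    thus ?thesis using 2 mult_right_le_imp_le s_def lam_def by blast
  qed
qed




lemma arith1:
  fixes \<gamma> c lam W X Y :: real
  assumes "\<gamma>*W \<le> \<gamma>*(lam*Y)" "(\<gamma>*(lam + 2*c))*Y \<le> 1*Y"
  shows "\<gamma>/2*(W + 2*c*Y + c^2*X) - (Y + c*X)/2 \<le> -(c*(1-c*\<gamma>)/2*X)"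
proof -
  have eq: "\<gamma>/2*(W + 2*c*Y + c^2*X) - (Y + c*X)/2 - (-(c*(1-c*\<gamma>)/2*X)) = (\<gamma>*W - \<gamma>*(lam*Y) + ((\<gamma>*(lam + 2*c))*Y - 1*Y))/2"
    by (simp add: field_simps power2_eq_square)
  have "\<gamma>*W - \<gamma>*(lam*Y) + ((\<gamma>*(lam + 2*c))*Y - 1*Y) \<le> 0" using assms by linarith
  hence "\<gamma>/2*(W + 2*c*Y + c^2*X) - (Y + c*X)/2 - (-(c*(1-c*\<gamma>)/2*X)) \<le> 0" unfolding eq by simp
  thus ?thesis by simp
qed

lemma step_decrease:
  fixes A :: "real^'n^'m" and b :: "real^'m" and y z y' z' x x' :: "real^'n" and \<gamma> c lam :: real
  assumes lam0: "0 \<le> lam" and Sb: "\<And>v. norm (transpose A *v (A *v v))^2 \<le> lam * norm (A *v v)^2"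
    and g0: "0 < \<gamma>" and c0: "0 \<le> c" and gl: "\<gamma> * (lam + 2*c) \<le> 1"
    and hx: "x = y + \<gamma> *\<^sub>R (transpose A *v (A *v y) + c *\<^sub>R y - transpose A *v b)"
    and hx': "x' = x + 2 *\<^sub>R (z - y)"
    and hy': "x' = y' + \<gamma> *\<^sub>R (transpose A *v (A *v y') + c *\<^sub>R y' - transpose A *v b)"
    and proj: "inner (2 *\<^sub>R y' - x') (z - z') \<le> (1 - c*\<gamma>)/2 * (norm z^2 - norm z'^2)"
  shows "Vf A b c \<gamma> y' z' \<le> Vf A b c \<gamma> y z - c*(1 - c*\<gamma>)/2 * norm (y' - y)^2"
proof -
  define Sop where "Sop v = transpose A *v (A *v v)" for v
  define p where "p = transpose A *v b"
  define \<Lambda> where "\<Lambda> = Sop y + c *\<^sub>R y - p"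
  define \<Lambda>' where "\<Lambda>' = Sop y' + c *\<^sub>R y' - p"
  define L where "L yy zz ll = Ff A b c yy - c/2 * norm zz^2 + inner ll (zz - yy) + norm (zz - yy)^2/(2*\<gamma>)"
    for yy zz ll
  define d where "d = y' - y"
  define a where "a = z - y"
  define h where "h = Sop d + c *\<^sub>R d"
  have Sop_inner: "inner (Sop u) v = inner (A *v u) (A *v v)" for u v
    unfolding Sop_def by (rule inner_transpose)
  have hL: "\<Lambda>' = \<Lambda> + h"
    unfolding \<Lambda>'_def \<Lambda>_def h_def d_def Sop_def
    by (simp add: matrix_vector_mult_diff_distrib algebra_simps)
  have eqx: "y' + \<gamma> *\<^sub>R \<Lambda>' = y + \<gamma> *\<^sub>R \<Lambda> + 2 *\<^sub>R a"
    using hx hx' hy' unfolding \<Lambda>'_def \<Lambda>_def a_def Sop_def p_def by simp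
  have R: "\<gamma> *\<^sub>R h = 2 *\<^sub>R a - d"
  proof -
    have "\<gamma> *\<^sub>R h = \<gamma> *\<^sub>R \<Lambda>' - \<gamma> *\<^sub>R \<Lambda>" using hL by (simp add: algebra_simps)
    also have "\<dots> = 2 *\<^sub>R a - d" using eqx unfolding d_def by (simp add: algebra_simps)
    finally show ?thesis .
  qed
  have VL: "Vf A b c \<gamma> yy zz = L yy zz (Sop yy + c *\<^sub>R yy - p)" for yy zz
  proof -
    have "Ff A b c (yy + (zz - yy)) = Ff A b c yy + inner (Sop yy + c *\<^sub>R yy - p) (zz - yy)
          + (norm (A *v (zz - yy))^2 + c * norm (zz - yy)^2) / 2"
      unfolding Sop_def p_def by (rule Fexp)
    hence "Ff A b c zz = Ff A b c yy + inner (Sop yy + c *\<^sub>R yy - p) (zz - yy)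
          + (norm (A *v (zz - yy))^2 + c * norm (zz - yy)^2) / 2" by simp
    thus ?thesis unfolding Vf_def L_def Ff_def p_def by (simp add: algebra_simps)
  qed
  have Fd: "Ff A b c y' = Ff A b c y + inner \<Lambda> d + (norm (A *v d)^2 + c * norm d^2) / 2"
  proof -
    have "Ff A b c (y + d) = Ff A b c y + inner \<Lambda> d + (norm (A *v d)^2 + c * norm d^2) / 2"
      unfolding \<Lambda>_def Sop_def p_def by (rule Fexp)
    thus ?thesis unfolding d_def by simp
  qed
  have e1: "inner \<Lambda>' (z - y') = inner \<Lambda> a - inner \<Lambda> d + inner h a - inner h d"
  proof -
    have "z - y' = a - d" unfolding a_def d_def by simp
    thus ?thesis using hL by (simp add: inner_add_left inner_diff_right)
  qed
  have e2: "norm (z - y')^2 = norm a^2 - 2 * inner a d + norm d^2"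
  proof -
    have "z - y' = a - d" unfolding a_def d_def by simp
    thus ?thesis by (simp add: power2_norm_eq_inner inner_diff_left inner_diff_right inner_commute)
  qed
  have e3: "\<gamma> * inner h a = 2 * norm a^2 - inner a d"
  proof -
    have "\<gamma> * inner h a = inner (\<gamma> *\<^sub>R h) a" by simp
    also have "\<dots> = 2 * norm a^2 - inner a d" unfolding R
      by (simp add: inner_diff_left inner_diff_right power2_norm_eq_inner inner_commute)
    finally show ?thesis .
  qed
  have e4: "\<gamma>^2 * norm h^2 = 4 * norm a^2 - 4 * inner a d + norm d^2"
  proof -
    have "\<gamma>^2 * norm h^2 = norm (\<gamma> *\<^sub>R h)^2" by (simp add: power_mult_distrib)
    also have "\<dots> = 4 * norm a^2 - 4 * inner a d + norm d^2" unfolding R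
      by (simp add: power2_norm_eq_inner inner_diff_left inner_diff_right inner_commute)
    finally show ?thesis .
  qed
  have e5: "inner h d = norm (A *v d)^2 + c * norm d^2"
    unfolding h_def by (simp add: inner_add_left Sop_inner power2_norm_eq_inner)
  have key: "inner h a + (norm d^2 - 2 * inner a d)/(2*\<gamma>) = \<gamma>/2 * norm h^2"
  proof -
    have "2*\<gamma>*(inner h a + (norm d^2 - 2 * inner a d)/(2*\<gamma>)) = 2*(\<gamma> * inner h a) + norm d^2 - 2 * inner a d"
      using g0 by (simp add: field_simps)
    also have "\<dots> = \<gamma>^2 * norm h^2" using e3 e4 by simp
    also have "\<dots> = 2*\<gamma>*(\<gamma>/2 * norm h^2)" by (simp add: power2_eq_square)
    finally have "2*\<gamma>*(inner h a + (norm d^2 - 2 * inner a d)/(2*\<gamma>)) = 2*\<gamma>*(\<gamma>/2 * norm h^2)" .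
    moreover have "2*\<gamma> \<noteq> 0" using g0 by simp
    ultimately show ?thesis by (metis mult_left_cancel)
  qed
  have stepB: "L y' z \<Lambda>' = L y z \<Lambda> + \<gamma>/2 * norm h^2 - inner h d / 2"
  proof -
    have "L y' z \<Lambda>' - L y z \<Lambda> = (Ff A b c y' - Ff A b c y) + inner \<Lambda>' (z - y') - inner \<Lambda> a
           + (norm (z - y')^2 - norm a^2)/(2*\<gamma>)"
      unfolding L_def a_def by (simp add: diff_divide_distrib)
    also have "\<dots> = inner h a - inner h d / 2 + (norm d^2 - 2 * inner a d)/(2*\<gamma>)"
    proof -
      have q: "(norm (z - y')^2 - norm a^2)/(2*\<gamma>) = (norm d^2 - 2 * inner a d)/(2*\<gamma>)"
        using e2 by simp
      show ?thesis using Fd e1 e5 q by argo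
    qed
    also have "\<dots> = \<gamma>/2 * norm h^2 - inner h d / 2" using key by simp
    finally show ?thesis by simp
  qed
  have stepA: "L y' z' \<Lambda>' \<le> L y' z \<Lambda>'"
  proof -
    have w: "2 *\<^sub>R y' - x' = y' - \<gamma> *\<^sub>R \<Lambda>'"
      unfolding hy' \<Lambda>'_def Sop_def p_def by (simp add: scaleR_2 algebra_simps)
    have pr: "inner y' z - inner y' z' - \<gamma> * (inner \<Lambda>' z - inner \<Lambda>' z') \<le> (1 - c*\<gamma>)/2 * (norm z^2 - norm z'^2)"
      using proj unfolding w by (simp add: inner_diff_left inner_diff_right algebra_simps)
    have "L y' z' \<Lambda>' - L y' z \<Lambda>' = ((1 - c*\<gamma>)/2 * (norm z'^2 - norm z^2) + \<gamma> * (inner \<Lambda>' z' - inner \<Lambda>' z)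
            + inner y' z - inner y' z') / \<gamma>"
      unfolding L_def using g0
      by (simp add: power2_norm_eq_inner inner_diff_left inner_diff_right inner_commute field_simps)
    also have "\<dots> \<le> 0"
    proof (intro divide_nonpos_pos)
      have "(1 - c*\<gamma>)/2 * (norm z'^2 - norm z^2) = - ((1 - c*\<gamma>)/2 * (norm z^2 - norm z'^2))"
        by (simp add: algebra_simps)
      moreover have "\<gamma> * (inner \<Lambda>' z' - inner \<Lambda>' z) = - (\<gamma> * (inner \<Lambda>' z - inner \<Lambda>' z'))"
        by (simp add: algebra_simps)
      ultimately show "(1 - c*\<gamma>)/2 * (norm z'^2 - norm z^2) + \<gamma> * (inner \<Lambda>' z' - inner \<Lambda>' z) + inner y' z - inner y' z' \<le> 0"
        using pr by linarith
    qed (rule g0)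
    finally show ?thesis by simp
  qed
  have hn0: "norm h^2 = inner (Sop d) (Sop d) + 2*c*inner (Sop d) d + c^2 * inner d d"
    unfolding h_def power2_norm_eq_inner
    by (simp add: inner_add_left inner_add_right inner_commute algebra_simps power2_eq_square)
  have hn: "norm h^2 = norm (Sop d)^2 + 2*c*norm (A *v d)^2 + c^2 * norm d^2"
    unfolding hn0 by (simp add: Sop_inner power2_norm_eq_inner)
  have b1: "\<gamma> * norm (Sop d)^2 \<le> \<gamma> * (lam * norm (A *v d)^2)"
    using Sb[of d] g0 unfolding Sop_def by (intro mult_left_mono) auto
  have b2: "(\<gamma> * (lam + 2*c)) * norm (A *v d)^2 \<le> 1 * norm (A *v d)^2"
    using gl by (intro mult_right_mono) auto
  have bound: "\<gamma>/2 * norm h^2 - inner h d / 2 \<le> - (c*(1 - c*\<gamma>)/2 * norm d^2)"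
    unfolding hn e5 by (rule arith1[OF b1 b2])
  have "Vf A b c \<gamma> y' z' = L y' z' \<Lambda>'" unfolding VL \<Lambda>'_def ..
  also have "\<dots> \<le> L y' z \<Lambda>'" by (rule stepA)
  also have "\<dots> = L y z \<Lambda> + \<gamma>/2 * norm h^2 - inner h d / 2" by (rule stepB)
  also have "L y z \<Lambda> = Vf A b c \<gamma> y z" unfolding VL \<Lambda>_def ..
  finally show ?thesis using bound unfolding d_def by simp
qed




lemma reg_subdiff_ind:
  fixes D :: "('a::real_inner) set"
  assumes zD: "z \<in> D" and K0: "0 \<le> K" and hv: "\<And>u. u \<in> D \<Longrightarrow> inner v (u - z) \<le> K * norm (u - z)^2"
  shows "v \<in> regular_subdiff (indicator_fun D) z"
  unfolding regular_subdiff_def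
proof (intro CollectI conjI)
  show "\<bar>indicator_fun D z\<bar> \<noteq> \<infinity>" using zD by (simp add: indicator_fun_def)
  show "0 \<le> Liminf (at z) (\<lambda>u. (indicator_fun D u - indicator_fun D z - ereal (inner v (u - z))) / ereal (norm (u - z)))"
  proof (rule le_Liminf_iff[THEN iffD2], intro allI impI)
    fix y :: ereal assume y0: "y < 0"
    obtain r where r0: "r < 0" and yr: "y \<le> ereal r"
    proof (cases y)
      case (real r) thus ?thesis using y0 that by auto
    next
      case PInf thus ?thesis using y0 by simp
    next
      case MInf thus ?thesis using that[of "-1"] by simp
    qed
    define e where "e = -r/(K+1)"
    have e0: "e > 0" unfolding e_def using r0 K0 by (intro divide_pos_pos) auto
    have "eventually (\<lambda>u. ereal r < (indicator_fun D u - indicator_fun D z - ereal (inner v (u - z))) / ereal (norm (u - z))) (at z)"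
      unfolding eventually_at
    proof (intro exI[of _ e] conjI ballI impI)
      show "e > 0" by (rule e0)
      fix u assume "u \<in> UNIV" and u: "u \<noteq> z \<and> dist u z < e"
      hence n0: "norm (u - z) > 0" and ne: "norm (u - z) < e" using u by (auto simp: dist_norm)
      show "ereal r < (indicator_fun D u - indicator_fun D z - ereal (inner v (u - z))) / ereal (norm (u - z))"
      proof (cases "u \<in> D")
        case False thus ?thesis using zD n0 by (simp add: indicator_fun_def)
      next
        case True
        have "inner v (u - z) / norm (u - z) \<le> K * norm (u - z)"
          using hv[OF True] n0 by (simp add: divide_le_eq power2_eq_square mult.assoc)
        also have "\<dots> \<le> K * e" using K0 ne by (intro mult_left_mono) auto
        also have "\<dots> < -r"
        proof -
          have "K * e = -r * (K / (K+1))" unfolding e_def by simp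
          also have "\<dots> < -r * 1" using r0 K0 by (intro mult_strict_left_mono) auto
          finally show ?thesis by simp
        qed
        finally have "r < - (inner v (u - z)) / norm (u - z)" by simp
        thus ?thesis using True zD n0 by (simp add: indicator_fun_def)
      qed
    qed
    thus "eventually (\<lambda>u. y < (indicator_fun D u - indicator_fun D z - ereal (inner v (u - z))) / ereal (norm (u - z))) (at z)"
      using yr by (auto elim!: eventually_mono intro: le_less_trans)
  qed
qed

lemma proj_ineq:
  fixes D :: "('a::real_inner) set"
  assumes zp: "z' \<in> proj_set D ((1/\<beta>) *\<^sub>R w)" and b0: "\<beta> > 0" and uD: "u \<in> D"
  shows "inner w (u - z') \<le> \<beta>/2 * (norm u^2 - norm z'^2)"
proof -
  have "dist ((1/\<beta>) *\<^sub>R w) z' \<le> dist ((1/\<beta>) *\<^sub>R w) u" using zp uD unfolding proj_set_def by auto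
  hence "norm ((1/\<beta>) *\<^sub>R w - z')^2 \<le> norm ((1/\<beta>) *\<^sub>R w - u)^2"
    by (simp add: dist_norm power_mono)
  hence "norm z'^2 - 2 * (1/\<beta>) * inner w z' \<le> norm u^2 - 2 * (1/\<beta>) * inner w u"
    by (simp add: power2_norm_eq_inner inner_diff_left inner_diff_right inner_commute algebra_simps)
  hence "2 * (1/\<beta>) * inner w (u - z') \<le> norm u^2 - norm z'^2"
    by (simp add: inner_diff_right algebra_simps)
  hence "\<beta>/2 * (2 * (1/\<beta>) * inner w (u - z')) \<le> \<beta>/2 * (norm u^2 - norm z'^2)"
    using b0 by (intro mult_left_mono) auto
  thus ?thesis using b0 by simp
qed

lemma proj_normal:
  fixes D :: "('a::real_inner) set"
  assumes zp: "z' \<in> proj_set D ((1/\<beta>) *\<^sub>R w)" and b0: "\<beta> > 0" and g0: "\<gamma> > 0"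
  shows "(1/\<gamma>) *\<^sub>R (w - \<beta> *\<^sub>R z') \<in> regular_subdiff (indicator_fun D) z'"
proof (rule reg_subdiff_ind)
  show "z' \<in> D" using zp unfolding proj_set_def by auto
  show "0 \<le> \<beta>/(2*\<gamma>)" using b0 g0 by simp
  fix u assume uD: "u \<in> D"
  have pi: "inner w (u - z') \<le> \<beta>/2 * (norm u^2 - norm z'^2)" by (rule proj_ineq[OF zp b0 uD])
  have "inner (w - \<beta> *\<^sub>R z') (u - z') \<le> \<beta>/2 * norm (u - z')^2"
  proof -
    have "inner (w - \<beta> *\<^sub>R z') (u - z') = inner w (u - z') - \<beta> * (inner z' u - norm z'^2)"
      by (simp add: inner_diff_left inner_diff_right power2_norm_eq_inner algebra_simps)
    also have "\<beta>/2 * norm (u - z')^2 = \<beta>/2 * (norm u^2 - norm z'^2) - \<beta> * (inner z' u - norm z'^2)"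
      by (simp add: power2_norm_eq_inner inner_diff_left inner_diff_right inner_commute algebra_simps)
    ultimately show ?thesis using pi by linarith
  qed
  hence "(1/\<gamma>) * inner (w - \<beta> *\<^sub>R z') (u - z') \<le> (1/\<gamma>) * (\<beta>/2 * norm (u - z')^2)"
    using g0 by (intro mult_left_mono) auto
  thus "inner ((1/\<gamma>) *\<^sub>R (w - \<beta> *\<^sub>R z')) (u - z') \<le> \<beta>/(2*\<gamma>) * norm (u - z')^2"
    by simp
qed

lemma V_lower:
  fixes A :: "real^'n^'m"
  assumes Ab: "\<And>w. norm (A *v w)^2 \<le> lam * norm w^2" and g0: "0 < \<gamma>" and gl: "\<gamma> * (lam + c) \<le> 1"
  shows "- (norm b^2/2) \<le> Vf A b c \<gamma> y z"
proof -
  have 1: "- (norm b^2/2) \<le> norm (A *v z)^2 / 2 - inner (transpose A *v b) z"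
  proof -
    have "0 \<le> norm (A *v z - b)^2" by simp
    also have "\<dots> = norm (A *v z)^2 - 2 * inner (transpose A *v b) z + norm b^2"
      by (simp add: power2_norm_eq_inner inner_diff_left inner_diff_right dot_lmul_matrix inner_lmul2 inner_commute)
    finally show ?thesis by simp
  qed
  have 2: "(norm (A *v (z - y))^2 + c * norm (z - y)^2) / 2 \<le> norm (z - y)^2 / (2*\<gamma>)"
  proof -
    have "norm (A *v (z - y))^2 + c * norm (z - y)^2 \<le> (lam + c) * norm (z - y)^2"
      using Ab[of "z - y"] by (simp add: algebra_simps)
    also have "\<dots> \<le> (1/\<gamma>) * norm (z - y)^2"
    proof (rule mult_right_mono)
      show "lam + c \<le> 1/\<gamma>" using gl g0 by (simp add: field_simps mult.commute)
    qed simp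
    finally show ?thesis using g0 by (simp add: field_simps)
  qed
  show ?thesis using 1 2 unfolding Vf_def by linarith
qed




lemma M_apply:
  fixes A :: "real^'n^'m"
  shows "(a *\<^sub>R mat 1 + g *\<^sub>R (transpose A ** A)) *v u = a *\<^sub>R u + g *\<^sub>R (transpose A *v (A *v u))"
  by (simp only: matrix_vector_mult_add_rdistrib scaleR_matrix_vector_assoc[symmetric]
      matrix_vector_mul_assoc[symmetric] matrix_vector_mul_lid)

lemma bounded_rec:
  fixes X :: "nat \<Rightarrow> real"
  assumes q0: "0 \<le> q" and q1: "q < 1" and rec: "\<And>t. X (Suc t) \<le> q * X t + C"
  shows "X t \<le> max (X 0) (C/(1-q))"
proof (induction t)
  case 0 thus ?case by simp
next
  case (Suc t)
  define B where "B = max (X 0) (C/(1-q))"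
  have "C \<le> (1-q) * B"
  proof -
    have "C/(1-q) \<le> B" unfolding B_def by simp
    thus ?thesis using q1 by (simp add: divide_le_eq mult.commute)
  qed
  moreover have "q * X t \<le> q * B" using Suc q0 unfolding B_def by (intro mult_left_mono) auto
  ultimately have "X (Suc t) \<le> B" using rec[of t] by (simp add: algebra_simps)
  thus ?case unfolding B_def .
qed

lemma inv_apply:
  fixes M :: "real^'n^'n"
  assumes inj: "\<And>u. M *v u = 0 \<Longrightarrow> u = 0"
  shows "M *v (matrix_inv M *v w) = w"
proof -
  have "inj ((*v) M)"
  proof (rule injI)
    fix u u' assume "M *v u = M *v u'"
    hence "M *v (u - u') = 0" by (simp add: matrix_vector_mult_diff_distrib)
    hence "u - u' = 0" by (rule inj)
    thus "u = u'" by simp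
  qed
  then obtain B where B: "B ** M = mat 1" using matrix_left_invertible_injective by blast
  hence "M ** B = mat 1" using matrix_left_right_inverse by blast
  hence "\<exists>A'. M ** A' = mat 1 \<and> A' ** M = mat 1" using B by blast
  hence "M ** matrix_inv M = mat 1" unfolding matrix_inv_def by (rule someI_ex[THEN conjunct1])
  thus ?thesis by (simp add: matrix_vector_mul_assoc)
qed




lemma vec_id1:
  fixes u T :: "'a::real_vector"
  shows "(5*g*l + 1) *\<^sub>R u + g *\<^sub>R T = u + g *\<^sub>R (T + (5*l) *\<^sub>R u)"
  by (simp add: algebra_simps)

lemma vec_id2:
  fixes x u W p :: "'a::real_vector"
  assumes "x = (u + g *\<^sub>R W) - g *\<^sub>R p"
  shows "x = u + g *\<^sub>R (W - p)"
  using assms by (simp add: algebra_simps)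

lemma vec_id3:
  fixes x' xt z u Mu p :: "'a::real_vector"
  assumes "x' = xt + 2 *\<^sub>R (z - u)" and "Mu = xt + g *\<^sub>R p"
  shows "x' = (Mu - 2 *\<^sub>R u) - g *\<^sub>R p + 2 *\<^sub>R z"
  using assms by (simp add: algebra_simps)

lemma norm3:
  fixes a b c :: "'a::real_normed_vector"
  shows "norm (a - b + c) \<le> norm a + norm b + norm c"
proof -
  have "norm (a - b + c) \<le> norm (a - b) + norm c" by (rule norm_triangle_ineq)
  also have "norm (a - b) \<le> norm a + norm b" by (rule norm_triangle_ineq4)
  finally show ?thesis by simp
qed

lemma vec_id4:
  fixes x1 x2 y1 y2 z S1 S2 Sd p :: "'a::real_vector"
  assumes "x1 = y1 + g *\<^sub>R (S1 + c *\<^sub>R y1 - p)" "x2 = y2 + g *\<^sub>R (S2 + c *\<^sub>R y2 - p)"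
    "x2 = x1 + 2 *\<^sub>R (z - y1)" "Sd = S2 - S1"
  shows "2 *\<^sub>R (z - y1) = (y2 - y1) + g *\<^sub>R (Sd + c *\<^sub>R (y2 - y1))"
proof -
  have h: "(y1 + g *\<^sub>R (S1 + c *\<^sub>R y1 - p) + 2 *\<^sub>R (z - y1)) - (y2 + g *\<^sub>R (S2 + c *\<^sub>R y2 - p)) = 0"
    using assms(1,2,3) by simp
  have "2 *\<^sub>R (z - y1) - ((y2 - y1) + g *\<^sub>R ((S2 - S1) + c *\<^sub>R (y2 - y1)))
     = (y1 + g *\<^sub>R (S1 + c *\<^sub>R y1 - p) + 2 *\<^sub>R (z - y1)) - (y2 + g *\<^sub>R (S2 + c *\<^sub>R y2 - p))"
    by (simp add: algebra_simps)
  hence "2 *\<^sub>R (z - y1) - ((y2 - y1) + g *\<^sub>R ((S2 - S1) + c *\<^sub>R (y2 - y1))) = 0" using h by simp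
  thus ?thesis unfolding assms(4) by simp
qed

lemma vec_id5:
  fixes x y z S p :: "'a::real_vector"
  assumes "x = y + g *\<^sub>R (S + c *\<^sub>R y - p)" "g \<noteq> 0" "\<beta> = 1 - c*g"
  shows "(1/g) *\<^sub>R ((2 *\<^sub>R y - x) - \<beta> *\<^sub>R z) = (1/g - c) *\<^sub>R (y - z) - S + p"
proof -
  have hg: "g * (1/g - c) = 1 - c*g" using assms(2) by (simp add: field_simps)
  have r: "g *\<^sub>R ((1/g - c) *\<^sub>R (y - z) - S + p) = (1 - c*g) *\<^sub>R (y - z) - g *\<^sub>R S + g *\<^sub>R p"
    by (simp only: scaleR_diff_right scaleR_add_right scaleR_scaleR hg)
  have "(2 *\<^sub>R y - x) - \<beta> *\<^sub>R z = (1 - c*g) *\<^sub>R (y - z) - g *\<^sub>R S + g *\<^sub>R p"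
    unfolding assms(1) assms(3) by (simp add: algebra_simps scaleR_2)
  hence "(2 *\<^sub>R y - x) - \<beta> *\<^sub>R z = g *\<^sub>R ((1/g - c) *\<^sub>R (y - z) - S + p)" using r by simp
  thus ?thesis using assms(2) by simp
qed

theorem mainTheorem12:
  fixes A :: "real^'n^'m" and b :: "real^'m" and D :: "(real^'n) set"
    and x y z :: "nat \<Rightarrow> real^'n" and \<gamma> :: real
  assumes lam_pos: "lambda_max (transpose A ** A) > 0"
    and D_ne: "D \<noteq> {}" and D_compact: "compact D"
    and gam_pos: "0 < \<gamma>" and gam_lt: "\<gamma> < 1 / (12 * lambda_max (transpose A ** A))"
    and y_upd: "\<And>t. y (Suc t) = matrix_inv ((5 * \<gamma> * lambda_max (transpose A ** A) + 1) *\<^sub>R mat 1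
                      + \<gamma> *\<^sub>R (transpose A ** A)) *v (x t + \<gamma> *\<^sub>R (transpose A *v b))"
    and z_upd: "\<And>t. z (Suc t) \<in> proj_set D ((1 / (1 - 5 * lambda_max (transpose A ** A) * \<gamma>))
                      *\<^sub>R (2 *\<^sub>R y (Suc t) - x t))"
    and x_upd: "\<And>t. x (Suc t) = x t + 2 *\<^sub>R (z (Suc t) - y (Suc t))"
  shows "bounded (range (\<lambda>t. (y (Suc t), z (Suc t), x (Suc t))))
    \<and> (\<forall>yb zb xb. (\<exists>r. strict_mono r \<and> (\<lambda>k. (y (Suc (r k)), z (Suc (r k)), x (Suc (r k))))
                         \<longlonglongrightarrow> (yb, zb, xb))
        \<longrightarrow> yb = zb \<and> - (transpose A *v (A *v zb - b)) \<in> limiting_subdiff (indicator_fun D) zb)"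
proof -
  define lam where "lam = lambda_max (transpose A ** A)"
  define c where "c = 5 * lam"
  define p where "p = transpose A *v b"
  define Sop where "Sop v = transpose A *v (A *v v)" for v
  define M where "M = (5 * \<gamma> * lam + 1) *\<^sub>R mat 1 + \<gamma> *\<^sub>R (transpose A ** A)"
  have lp: "lam > 0" using lam_pos unfolding lam_def .
  have g12: "\<gamma> * (12 * lam) < 1" using gam_lt lp unfolding lam_def by (simp add: less_divide_eq mult.commute)
  have gl: "\<gamma> * lam < 1/12" using g12 by simp
  have c0: "c > 0" unfolding c_def using lp by simp
  define \<beta> where "\<beta> = 1 - c * \<gamma>"
  have b0: "\<beta> > 0" unfolding \<beta>_def c_def using gl by (simp add: algebra_simps)
  have Ab: "\<And>w. norm (A *v w)^2 \<le> lam * norm w^2" unfolding lam_def by (rule eig_bound)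
  have Sb: "\<And>v. norm (Sop v)^2 \<le> lam * norm (A *v v)^2"
    unfolding Sop_def lam_def using lp lam_def by (intro S_norm_bound) simp
  have Sb2: "norm (Sop v) \<le> lam * norm v" for v
  proof -
    have "norm (Sop v)^2 \<le> lam * (lam * norm v^2)"
      using Sb[of v] Ab[of v] lp by (meson mult_left_mono less_imp_le order_trans)
    also have "\<dots> = (lam * norm v)^2" by (simp add: power2_eq_square)
    finally have h: "norm (Sop v)^2 \<le> (lam * norm v)^2" .
    show ?thesis by (rule power2_le_imp_le[OF h]) (use lp in simp)
  qed
  have Sop_inner: "inner (Sop u) v = inner (A *v u) (A *v v)" for u v
    unfolding Sop_def by (rule inner_transpose)
  have Mapp: "M *v u = u + \<gamma> *\<^sub>R (Sop u + c *\<^sub>R u)" for u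
    unfolding M_def M_apply Sop_def c_def by (rule vec_id1)
  have Minner: "inner (M *v u) u = (1 + \<gamma>*c) * norm u^2 + \<gamma> * norm (A *v u)^2" for u
    unfolding Mapp by (simp add: inner_add_left Sop_inner power2_norm_eq_inner algebra_simps)
  have Minj: "u = 0" if "M *v u = 0" for u
  proof -
    have "(1 + \<gamma>*c) * norm u^2 + \<gamma> * norm (A *v u)^2 = 0" using Minner[of u] that by simp
    moreover have "0 \<le> \<gamma> * norm (A *v u)^2" using gam_pos by simp
    moreover have "1 + \<gamma>*c > 0" using gam_pos c0 by (simp add: add_pos_nonneg)
    ultimately have "(1 + \<gamma>*c) * norm u^2 \<le> 0" by linarith
    hence "norm u^2 \<le> 0" using \<open>1 + \<gamma>*c > 0\<close> by (simp add: mult_le_0_iff)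
    thus ?thesis by simp
  qed
  have yM: "M *v y (Suc t) = x t + \<gamma> *\<^sub>R p" for t
  proof -
    have "M *v y (Suc t) = M *v (matrix_inv M *v (x t + \<gamma> *\<^sub>R p))"
      unfolding y_upd M_def lam_def p_def ..
    also have "\<dots> = x t + \<gamma> *\<^sub>R p" by (rule inv_apply) (rule Minj)
    finally show ?thesis .
  qed
  have yrel: "x t = y (Suc t) + \<gamma> *\<^sub>R (Sop (y (Suc t)) + c *\<^sub>R y (Suc t) - p)" for t
  proof (rule vec_id2)
    have "x t = M *v y (Suc t) - \<gamma> *\<^sub>R p" using yM[of t] by simp
    thus "x t = (y (Suc t) + \<gamma> *\<^sub>R (Sop (y (Suc t)) + c *\<^sub>R y (Suc t))) - \<gamma> *\<^sub>R p"
      unfolding Mapp .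
  qed
  have zD: "z (Suc t) \<in> D" for t using z_upd[of t] unfolding proj_set_def by auto
  have zproj: "z (Suc t) \<in> proj_set D ((1/\<beta>) *\<^sub>R (2 *\<^sub>R y (Suc t) - x t))" for t
    using z_upd[of t] unfolding \<beta>_def c_def lam_def .
  obtain R where R: "\<And>u. u \<in> D \<Longrightarrow> norm u \<le> R"
    using compact_imp_bounded[OF D_compact] unfolding bounded_iff by blast
  define K where "K = 1 + \<gamma>*c + \<gamma>*lam"
  have gc0: "\<gamma>*c > 0" using gam_pos c0 by simp
  have K1: "K \<ge> 1 + \<gamma>*c" unfolding K_def using gam_pos lp by simp
  have Kpos: "K > 0" using K1 gc0 by simp
  have MK: "norm (M *v u) \<le> K * norm u" for u
  proof -
    have "norm (M *v u) \<le> norm u + norm (\<gamma> *\<^sub>R (Sop u + c *\<^sub>R u))"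
      unfolding Mapp by (rule norm_triangle_ineq)
    also have "norm (\<gamma> *\<^sub>R (Sop u + c *\<^sub>R u)) = \<gamma> * norm (Sop u + c *\<^sub>R u)" using gam_pos by simp
    also have "norm (Sop u + c *\<^sub>R u) \<le> norm (Sop u) + c * norm u"
      using norm_triangle_ineq[of "Sop u" "c *\<^sub>R u"] c0 by simp
    finally have "norm (M *v u) \<le> norm u + \<gamma> * (norm (Sop u) + c * norm u)"
      using gam_pos by (simp add: mult_left_mono)
    also have "\<dots> \<le> norm u + \<gamma> * (lam * norm u + c * norm u)"
      using Sb2[of u] gam_pos by (intro add_left_mono mult_left_mono) auto
    also have "\<dots> = K * norm u" unfolding K_def by (simp add: algebra_simps)
    finally show ?thesis .
  qed
  have Mge: "(1 + \<gamma>*c) * norm u^2 \<le> inner (M *v u) u" for u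
    unfolding Minner using gam_pos by simp
  have M2: "norm (M *v u - 2 *\<^sub>R u)^2 \<le> norm (M *v u)^2 - 4*(\<gamma>*c)*norm u^2" for u
  proof -
    have "norm (M *v u - 2 *\<^sub>R u)^2 = norm (M *v u)^2 - 4 * inner (M *v u) u + 4 * norm u^2"
      by (simp add: power2_norm_eq_inner inner_diff_left inner_diff_right inner_commute)
    thus ?thesis using Mge[of u] by (simp add: algebra_simps)
  qed
  define q2 where "q2 = 1 - 4*(\<gamma>*c)/K^2"
  have q2lt: "q2 < 1" unfolding q2_def using gc0 Kpos by simp
  have q2ge: "0 \<le> q2"
  proof -
    have "4*(\<gamma>*c) \<le> (1 + \<gamma>*c)^2"
      using zero_le_power2[of "1 - \<gamma>*c"] by (simp add: power2_eq_square algebra_simps)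
    also have "\<dots> \<le> K^2" using K1 gc0 by (intro power_mono) auto
    finally show ?thesis unfolding q2_def using Kpos by (simp add: divide_le_eq)
  qed
  define q where "q = sqrt q2"
  have q0: "0 \<le> q" and q1: "q < 1" unfolding q_def using q2ge q2lt by auto
  have contr: "norm (M *v u - 2 *\<^sub>R u) \<le> q * norm (M *v u)" for u
  proof -
    have "norm (M *v u)^2 \<le> K^2 * norm u^2"
      using power_mono[OF MK[of u], of 2] by (simp add: power_mult_distrib)
    hence "norm (M *v u)^2 / K^2 \<le> norm u^2" using Kpos by (simp add: divide_le_eq mult.commute)
    hence "4*(\<gamma>*c) * (norm (M *v u)^2 / K^2) \<le> 4*(\<gamma>*c) * norm u^2"
      using gc0 by (intro mult_left_mono) auto
    hence "norm (M *v u - 2 *\<^sub>R u)^2 \<le> q2 * norm (M *v u)^2"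
      using M2[of u] unfolding q2_def by (simp add: algebra_simps)
    also have "\<dots> = (q * norm (M *v u))^2" unfolding q_def using q2ge by (simp add: power_mult_distrib)
    finally have h: "norm (M *v u - 2 *\<^sub>R u)^2 \<le> (q * norm (M *v u))^2" .
    show ?thesis by (rule power2_le_imp_le[OF h]) (use q0 in simp)
  qed
  define C where "C = 2*\<gamma>*norm p + 2*R"
  have xrec: "norm (x (Suc t)) \<le> q * norm (x t) + C" for t
  proof -
    define u where "u = y (Suc t)"
    have xe: "x (Suc t) = (M *v u - 2 *\<^sub>R u) - \<gamma> *\<^sub>R p + 2 *\<^sub>R z (Suc t)"
      unfolding u_def by (rule vec_id3[OF x_upd yM])
    have "norm (x (Suc t)) \<le> norm (M *v u - 2 *\<^sub>R u) + norm (\<gamma> *\<^sub>R p) + norm (2 *\<^sub>R z (Suc t))"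
      unfolding xe by (rule norm3)
    also have "\<dots> \<le> q * norm (x t + \<gamma> *\<^sub>R p) + \<gamma> * norm p + 2 * R"
      using contr[of u] R[OF zD[of t]] gam_pos unfolding u_def yM by simp
    also have "q * norm (x t + \<gamma> *\<^sub>R p) \<le> q * (norm (x t) + \<gamma> * norm p)"
      using q0 gam_pos by (intro mult_left_mono) (auto intro: order_trans[OF norm_triangle_ineq])
    also have "\<dots> \<le> q * norm (x t) + \<gamma> * norm p" using q1 q0 gam_pos mult_right_mono[of q 1 "norm p"] by (simp add: algebra_simps)
    finally show ?thesis unfolding C_def by simp
  qed
  define Bx where "Bx = max (norm (x 0)) (C/(1-q))"
  have xB: "norm (x t) \<le> Bx" for t
    unfolding Bx_def by (rule bounded_rec[where X="\<lambda>t. norm (x t)", OF q0 q1 xrec])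
  have yB: "norm (y (Suc t)) \<le> Bx + \<gamma> * norm p" for t
  proof -
    define u where "u = y (Suc t)"
    have "norm u^2 \<le> inner (M *v u) u" using Mge[of u] gc0 mult_right_mono[of 1 "1 + \<gamma>*c" "norm u^2"] by simp
    also have "\<dots> \<le> norm (M *v u) * norm u" by (rule norm_cauchy_schwarz)
    finally have "norm u \<le> norm (M *v u)" by (cases "u = 0") (simp_all add: power2_eq_square mult_le_cancel_right)
    also have "\<dots> \<le> norm (x t) + \<gamma> * norm p" unfolding u_def yM using gam_pos
      using norm_triangle_ineq[of "x t" "\<gamma> *\<^sub>R p"] by simp
    finally show ?thesis using xB[of t] unfolding u_def by simp
  qed
  have bnd: "bounded (range (\<lambda>t. (y (Suc t), z (Suc t), x (Suc t))))"
  proof (rule bounded_subset)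
    show "bounded (cball 0 (Bx + \<gamma> * norm p) \<times> (cball 0 R \<times> cball 0 Bx))"
      by (intro bounded_Times bounded_cball)
    show "range (\<lambda>t. (y (Suc t), z (Suc t), x (Suc t))) \<subseteq> cball 0 (Bx + \<gamma> * norm p) \<times> (cball 0 R \<times> cball 0 Bx)"
      using yB xB R zD by auto
  qed
  define W where "W k = Vf A b c \<gamma> (y (Suc k)) (z (Suc k))" for k
  define dy where "dy k = y (Suc (Suc k)) - y (Suc k)" for k
  define \<delta> where "\<delta> = c*(1 - c*\<gamma>)/2"
  have \<delta>0: "\<delta> > 0" unfolding \<delta>_def using c0 b0 unfolding \<beta>_def by simp
  have Sb': "\<And>v. norm (transpose A *v (A *v v))^2 \<le> lam * norm (A *v v)^2"
    using Sb unfolding Sop_def .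
  have gl11: "\<gamma> * (lam + 2*c) \<le> 1" unfolding c_def using gl by (simp add: algebra_simps)
  have gl6: "\<gamma> * (lam + c) \<le> 1" unfolding c_def using gl by (simp add: algebra_simps)
  have yrel': "x t = y (Suc t) + \<gamma> *\<^sub>R (transpose A *v (A *v y (Suc t)) + c *\<^sub>R y (Suc t) - transpose A *v b)" for t
    using yrel[of t] unfolding Sop_def p_def .
  have Wdec: "W (Suc k) \<le> W k - \<delta> * norm (dy k)^2" for k
  proof -
    have pr: "inner (2 *\<^sub>R y (Suc (Suc k)) - x (Suc k)) (z (Suc k) - z (Suc (Suc k)))
        \<le> (1 - c*\<gamma>)/2 * (norm (z (Suc k))^2 - norm (z (Suc (Suc k)))^2)"
      using proj_ineq[OF zproj[of "Suc k"] b0 zD[of k]] unfolding \<beta>_def .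
    show ?thesis
      using step_decrease[OF less_imp_le[OF lp] Sb' gam_pos less_imp_le[OF c0] gl11 yrel'[of k] x_upd[of k] yrel'[of "Suc k"] pr]
      unfolding W_def dy_def \<delta>_def .
  qed
  have Wlow: "- (norm b^2/2) \<le> W k" for k
    unfolding W_def by (rule V_lower[OF Ab gam_pos gl6])
  have "decseq W"
  proof (rule decseq_SucI)
    fix n
    have "0 \<le> \<delta> * norm (dy n)^2" using \<delta>0 by simp
    thus "W (Suc n) \<le> W n" using Wdec[of n] by linarith
  qed
  then obtain Lw where Lw: "W \<longlonglongrightarrow> Lw" using Wlow decseq_convergent by blast
  have Wd: "(\<lambda>k. W k - W (Suc k)) \<longlonglongrightarrow> 0"
    using tendsto_diff[OF Lw LIMSEQ_Suc[OF Lw]] by simp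
  have dy2: "(\<lambda>k. norm (dy k)^2) \<longlonglongrightarrow> 0"
  proof (rule tendsto_sandwich[of "\<lambda>_. 0" _ _ "\<lambda>k. (W k - W (Suc k)) / \<delta>"])
    show "\<forall>\<^sub>F k in sequentially. 0 \<le> norm (dy k)^2" by simp
    show "\<forall>\<^sub>F k in sequentially. norm (dy k)^2 \<le> (W k - W (Suc k)) / \<delta>"
    proof (intro always_eventually allI)
      fix k show "norm (dy k)^2 \<le> (W k - W (Suc k)) / \<delta>"
        using Wdec[of k] \<delta>0 by (simp add: le_divide_eq mult.commute)
    qed
    show "(\<lambda>_. 0) \<longlonglongrightarrow> (0::real)" by simp
    show "(\<lambda>k. (W k - W (Suc k)) / \<delta>) \<longlonglongrightarrow> 0" using tendsto_divide[OF Wd tendsto_const[of \<delta>]] \<delta>0 by simp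
  qed
  have dyt: "dy \<longlonglongrightarrow> 0"
  proof -
    have "(\<lambda>k. sqrt (norm (dy k)^2)) \<longlonglongrightarrow> sqrt 0" by (rule tendsto_real_sqrt[OF dy2])
    hence "(\<lambda>k. norm (dy k)) \<longlonglongrightarrow> 0" by simp
    thus ?thesis by (simp add: tendsto_norm_zero_iff)
  qed
  have zy: "(\<lambda>k. z (Suc k) - y (Suc k)) \<longlonglongrightarrow> 0"
  proof (rule Lim_null_comparison)
    show "\<forall>\<^sub>F k in sequentially. norm (z (Suc k) - y (Suc k)) \<le> (1 + \<gamma>*(lam + c))/2 * norm (dy k)"
    proof (intro always_eventually allI)
      fix k
      have Sd: "Sop (dy k) = Sop (y (Suc (Suc k))) - Sop (y (Suc k))"
        unfolding Sop_def dy_def by (simp only: matrix_vector_mult_diff_distrib)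
      have e: "2 *\<^sub>R (z (Suc k) - y (Suc k)) = dy k + \<gamma> *\<^sub>R (Sop (dy k) + c *\<^sub>R dy k)"
        unfolding dy_def by (rule vec_id4[OF yrel[of k] yrel[of "Suc k"] x_upd[of k] Sd[unfolded dy_def]])
      have "2 * norm (z (Suc k) - y (Suc k)) = norm (dy k + \<gamma> *\<^sub>R (Sop (dy k) + c *\<^sub>R dy k))"
        unfolding e[symmetric] by simp
      also have "\<dots> \<le> norm (dy k) + \<gamma> * norm (Sop (dy k) + c *\<^sub>R dy k)"
        using norm_triangle_ineq[of "dy k" "\<gamma> *\<^sub>R (Sop (dy k) + c *\<^sub>R dy k)"] gam_pos by simp
      also have "norm (Sop (dy k) + c *\<^sub>R dy k) \<le> lam * norm (dy k) + c * norm (dy k)"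
        using norm_triangle_ineq[of "Sop (dy k)" "c *\<^sub>R dy k"] Sb2[of "dy k"] c0 by simp
      finally have "2 * norm (z (Suc k) - y (Suc k)) \<le> norm (dy k) + \<gamma> * (lam * norm (dy k) + c * norm (dy k))"
        using gam_pos by (simp add: mult_left_mono)
      thus "norm (z (Suc k) - y (Suc k)) \<le> (1 + \<gamma>*(lam + c))/2 * norm (dy k)"
        by (simp add: algebra_simps)
    qed
    show "(\<lambda>k. (1 + \<gamma>*(lam + c))/2 * norm (dy k)) \<longlonglongrightarrow> 0"
      using tendsto_mult_right_zero[OF tendsto_norm_zero[OF dyt]] by simp
  qed
  have nv: "(1/\<gamma>) *\<^sub>R ((2 *\<^sub>R y (Suc t) - x t) - \<beta> *\<^sub>R z (Suc t)) \<in> regular_subdiff (indicator_fun D) (z (Suc t))" for t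
    by (rule proj_normal[OF zproj b0 gam_pos])
  have nvf: "(1/\<gamma>) *\<^sub>R ((2 *\<^sub>R y (Suc t) - x t) - \<beta> *\<^sub>R z (Suc t))
      = (1/\<gamma> - c) *\<^sub>R (y (Suc t) - z (Suc t)) - Sop (y (Suc t)) + p" for t
    using gam_pos unfolding \<beta>_def by (intro vec_id5[OF yrel[of t]]) auto
  have clus: "yb = zb \<and> - (transpose A *v (A *v zb - b)) \<in> limiting_subdiff (indicator_fun D) zb"
    if ex: "\<exists>r. strict_mono r \<and> (\<lambda>k. (y (Suc (r k)), z (Suc (r k)), x (Suc (r k)))) \<longlonglongrightarrow> (yb, zb, xb)"
    for yb zb xb
  proof -
    obtain r where r: "strict_mono r" and conv: "(\<lambda>k. (y (Suc (r k)), z (Suc (r k)), x (Suc (r k)))) \<longlonglongrightarrow> (yb, zb, xb)"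
      using ex by blast
    have Yr: "(\<lambda>k. y (Suc (r k))) \<longlonglongrightarrow> yb" using tendsto_fst[OF conv] by simp
    have Zr: "(\<lambda>k. z (Suc (r k))) \<longlonglongrightarrow> zb" using tendsto_fst[OF tendsto_snd[OF conv]] by simp
    have zyr: "(\<lambda>k. z (Suc (r k)) - y (Suc (r k))) \<longlonglongrightarrow> 0"
      using LIMSEQ_subseq_LIMSEQ[OF zy r] by (simp add: o_def)
    have "(\<lambda>k. z (Suc (r k)) - y (Suc (r k))) \<longlonglongrightarrow> zb - yb" by (rule tendsto_diff[OF Zr Yr])
    hence "zb - yb = 0" using zyr LIMSEQ_unique by blast
    hence yz: "yb = zb" by simp
    have zbD: "zb \<in> D" using closed_sequentially[OF compact_imp_closed[OF D_compact] _ Zr] zD by blast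
    have SopT: "(\<lambda>k. Sop (y (Suc (r k)))) \<longlonglongrightarrow> Sop yb"
      unfolding Sop_def
      by (intro bounded_linear.tendsto[OF matrix_vector_mul_bounded_linear] Yr)
    have yzr: "(\<lambda>k. y (Suc (r k)) - z (Suc (r k))) \<longlonglongrightarrow> 0"
      using tendsto_minus[OF zyr] by simp
    have vT: "(\<lambda>k. (1/\<gamma>) *\<^sub>R ((2 *\<^sub>R y (Suc (r k)) - x (r k)) - \<beta> *\<^sub>R z (Suc (r k))))
        \<longlonglongrightarrow> (1/\<gamma> - c) *\<^sub>R 0 - Sop yb + p"
      unfolding nvf by (intro tendsto_add tendsto_diff tendsto_scaleR tendsto_const yzr SopT)
    have lim_eq: "(1/\<gamma> - c) *\<^sub>R 0 - Sop yb + p = - (transpose A *v (A *v zb - b))"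
      unfolding yz Sop_def p_def by (simp only: matrix_vector_mult_diff_distrib scaleR_zero_right) simp
    have "- (transpose A *v (A *v zb - b)) \<in> limiting_subdiff (indicator_fun D) zb"
      unfolding limiting_subdiff_def
    proof (intro CollectI exI conjI allI)
      show "(\<lambda>k. z (Suc (r k))) \<longlonglongrightarrow> zb" by (rule Zr)
      show "(\<lambda>t. indicator_fun D (z (Suc (r t)))) \<longlonglongrightarrow> indicator_fun D zb"
        using zD zbD by (simp add: indicator_fun_def)
      show "(\<lambda>k. (1/\<gamma>) *\<^sub>R ((2 *\<^sub>R y (Suc (r k)) - x (r k)) - \<beta> *\<^sub>R z (Suc (r k))))
        \<longlonglongrightarrow> - (transpose A *v (A *v zb - b))" using vT unfolding lim_eq .
      fix t show "(1/\<gamma>) *\<^sub>R ((2 *\<^sub>R y (Suc (r t)) - x (r t)) - \<beta> *\<^sub>R z (Suc (r t)))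
         \<in> regular_subdiff (indicator_fun D) (z (Suc (r t)))" by (rule nv)
    qed
    thus ?thesis using yz by simp
  qed
  show ?thesis using bnd clus by blast
qed


end
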